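(* Let $C=[x,x+1)\times[y,y+1)$ with $x,y\in\mathbb{Z}$ be a cell of the integer grid, let $\mathcal{D}(C)$ be a finite set of disks of radius $\sqrt{2}$ whose centers lie in $C$, let $\ell_{\mathrm{top}}(C)$ be the line containing the top edge of $C$, and let $U_{\mathrm{top}}(C)$ be the part of the union of the disks in $\mathcal{D}(C)$ lying above $\ell_{\mathrm{top}}(C)$. Then each disk $D_i\in\mathcal{D}(C)$ contributes at most one arc to the boundary of $U_{\mathrm{top}}(C)$. Moreover, for disks $D_i,D_j\in\mathcal{D}(C)$ with centers $p_i,p_j$ that both contribute arcs, the arc contributed by $D_i$ lies to the left of the arc contributed by $D_j$ if and only if $p_i$ lies to the left of $p_j$. *)

theory Defs
  imports "HOL-Analysis.Analysis"
begin

definition cell :: "int \<Rightarrow> int \<Rightarrow> (real \<times> real) set" where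
  "cell x y = {real_of_int x ..< real_of_int x + 1} \<times> {real_of_int y ..< real_of_int y + 1}"

definition Utop :: "int \<Rightarrow> (real \<times> real) set \<Rightarrow> (real \<times> real) set" where
  "Utop y P = (\<Union>p\<in>P. cball p (sqrt 2)) \<inter> {q. snd q \<ge> real_of_int y + 1}"

definition arc_of :: "int \<Rightarrow> (real \<times> real) set \<Rightarrow> real \<times> real \<Rightarrow> (real \<times> real) set" where
  "arc_of y P p = frontier (Utop y P) \<inter> sphere p (sqrt 2) \<inter> {q. snd q > real_of_int y + 1}"

definition contributes :: "int \<Rightarrow> (real \<times> real) set \<Rightarrow> real \<times> real \<Rightarrow> bool" where
  "contributes y P p \<longleftrightarrow> (\<exists>a b. a \<in> arc_of y P p \<and> b \<in> arc_of y P p \<and> a \<noteq> b)"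

end

theory Submission imports Defs begin

lemma L_real:
  fixes d1 d2 \<sigma> \<gamma> t \<beta> :: real
  assumes d1: "d1 \<ge> 0" and d2: "d2 \<ge> 0" and dnz: "d1 \<noteq> 0 \<or> d2 \<noteq> 0" and g: "\<gamma> > 0"
    and a1: "(\<sigma>+d1)^2+(\<gamma>+d2)^2 = 2" and a2: "\<sigma>^2+\<gamma>^2 \<ge> 2"
    and b1: "t^2+\<beta>^2 = 2" and bpos: "\<beta> > 0" and b2: "(t+d1)^2+(\<beta>+d2)^2 \<ge> 2"
  shows "\<sigma> \<le> t"
proof (rule ccontr)
  assume "\<not> \<sigma> \<le> t" hence st: "t < \<sigma>" by simp
  have "t^2 \<le> 2" using b1 by (smt (verit) zero_le_power2)
  hence "- t \<le> sqrt 2" using real_le_rsqrt[of "-t" 2] by simp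
  have "(\<sigma>+d1)^2 < 2" using a1 g d2 by (smt (verit) zero_less_power2)
  hence "\<sigma> + d1 < sqrt 2" using real_less_rsqrt by blast
  have s2: "\<sigma>^2 < 2"
  proof -
    have "\<bar>\<sigma>\<bar> < sqrt 2" using \<open>- t \<le> sqrt 2\<close> st \<open>\<sigma> + d1 < sqrt 2\<close> d1 by linarith
    hence "\<bar>\<sigma>\<bar>^2 < (sqrt 2)^2" by (intro power_strict_mono) auto
    thus ?thesis by simp
  qed
  define c where "c = sqrt (2 - \<sigma>^2)"
  have c0: "c > 0" using s2 by (simp add: c_def)
  have c2: "c^2 = 2 - \<sigma>^2" using s2 by (simp add: c_def)
  have "c^2 \<le> \<gamma>^2" using c2 a2 by linarith
  hence cg: "c \<le> \<gamma>" using g power2_le_imp_le[of c \<gamma>] by linarith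
  have "(c+d2)^2 \<le> (\<gamma>+d2)^2" using cg c0 d2 by (intro power_mono) auto
  hence "(\<sigma>+d1)^2+(c+d2)^2 \<le> 2" using a1 by linarith
  hence e1: "2*\<sigma>*d1 + 2*c*d2 + d1^2 + d2^2 \<le> 0" using c2 by (simp add: power2_eq_square algebra_simps)
  have rpos: "d1^2 + d2^2 > 0" using dnz by (simp add: sum_power2_gt_zero_iff)
  have sneg: "\<sigma> < 0"
  proof (rule ccontr)
    assume "\<not> \<sigma> < 0"
    hence "\<sigma>*d1 \<ge> 0" "c*d2 \<ge> 0" using d1 d2 c0 by auto
    thus False using e1 rpos by linarith
  qed
  have "(t-\<sigma>)*(t+\<sigma>) > 0" using st sneg by (intro mult_neg_neg) auto
  hence "\<sigma>^2 < t^2" by (simp add: power2_eq_square algebra_simps)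
  hence "\<beta>^2 < c^2" using b1 c2 by linarith
  hence bc: "\<beta> < c" using c0 power_less_imp_less_base[of \<beta> 2 c] by linarith
  have e2: "2*t*d1 + 2*\<beta>*d2 + d1^2 + d2^2 \<ge> 0" using b2 b1 by (simp add: power2_eq_square algebra_simps)
  have "t*d1 + \<beta>*d2 < \<sigma>*d1 + c*d2"
  proof (cases "d1 = 0")
    case True then have "d2 > 0" using dnz d2 by auto
    then show ?thesis using True bc by simp
  next
    case False then have "d1 > 0" using d1 by auto
    then have "t*d1 < \<sigma>*d1" using st by simp
    moreover have "\<beta>*d2 \<le> c*d2" using bc d2 by (simp add: mult_right_mono)
    ultimately show ?thesis by linarith
  qed
  thus False using e1 e2 by linarith
qed


definition D :: "real \<times> real \<Rightarrow> real \<times> real \<Rightarrow> real" where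
  "D u v = (fst u - fst v)^2 + (snd u - snd v)^2"

lemma dist_D: "dist u v = sqrt (D u v)"
  by (cases u, cases v) (simp add: D_def dist_Pair_Pair dist_real_def)

lemma D_comm: "D u v = D v u"
  by (simp add: D_def power2_commute)

lemma L_pt:
  fixes p q a b :: "real \<times> real"
  assumes "p \<noteq> q" "fst p \<le> fst q" "snd p \<le> snd q"
    "D a p = 2" "D a q \<ge> 2" "snd a > snd q" "D b q = 2" "D b p \<ge> 2" "snd b > snd q"
  shows "fst a \<le> fst b"
proof -
  have dnz: "fst q - fst p \<noteq> 0 \<or> snd q - snd p \<noteq> 0" using assms(1) by (auto simp: prod_eq_iff)
  have "fst a - fst q \<le> fst b - fst q"
  proof (rule L_real[of "fst q - fst p" "snd q - snd p" "snd a - snd q" "fst a - fst q" "fst b - fst q" "snd b - snd q"])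
    show "(fst a - fst q + (fst q - fst p))\<^sup>2 + (snd a - snd q + (snd q - snd p))\<^sup>2 = 2"
      using assms(4) by (simp add: D_def)
    show "(fst b - fst q + (fst q - fst p))\<^sup>2 + (snd b - snd q + (snd q - snd p))\<^sup>2 \<ge> 2"
      using assms(8) by (simp add: D_def)
  qed (use assms dnz in \<open>auto simp: D_def\<close>)
  thus ?thesis by simp
qed

lemma L2:
  fixes p q a b :: "real \<times> real"
  assumes "p \<noteq> q" "fst p \<le> fst q" "snd p < Y" "snd q < Y"
    "D a p = 2" "D a q \<ge> 2" "snd a > Y" "D b q = 2" "D b p \<ge> 2" "snd b > Y"
  shows "fst a \<le> fst b"
proof (cases "snd p \<le> snd q")
  case True
  then show ?thesis using L_pt[of p q a b] assms by auto
next
  case False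
  have "fst (-fst b, snd b) \<le> fst (-fst a, snd a)"
    apply (rule L_pt[of "(-fst q, snd q)" "(-fst p, snd p)"])
    using assms False by (auto simp: prod_eq_iff D_def power2_commute)
  then show ?thesis by simp
qed

lemma rhombus:
  fixes z w p q :: "real \<times> real"
  assumes "D z p = 2" "D z q = 2" "D w p = 2" "D w q = 2" "p \<noteq> q" "z \<noteq> w"
  shows "snd z + snd w = snd p + snd q"
proof -
  obtain z1 z2 w1 w2 p1 p2 q1 q2 where defs: "z = (z1,z2)" "w = (w1,w2)" "p = (p1,p2)" "q = (q1,q2)"
    by (metis prod.collapse)
  define A1 where "A1 = z1 - (p1+q1)/2"
  define A2 where "A2 = z2 - (p2+q2)/2"
  define B1 where "B1 = w1 - (p1+q1)/2"
  define B2 where "B2 = w2 - (p2+q2)/2"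
  define e1 where "e1 = q1 - p1"
  define e2 where "e2 = q2 - p2"
  have i1: "A1 + e1/2 = z1 - p1" "A2 + e2/2 = z2 - p2" "A1 - e1/2 = z1 - q1" "A2 - e2/2 = z2 - q2"
    "B1 + e1/2 = w1 - p1" "B2 + e2/2 = w2 - p2" "B1 - e1/2 = w1 - q1" "B2 - e2/2 = w2 - q2"
    by (simp_all add: A1_def A2_def B1_def B2_def e1_def e2_def field_simps)
  have hz1: "(A1 + e1/2)^2 + (A2 + e2/2)^2 = 2" unfolding i1 using assms(1) defs by (simp add: D_def)
  have hz2: "(A1 - e1/2)^2 + (A2 - e2/2)^2 = 2" unfolding i1 using assms(2) defs by (simp add: D_def)
  have hw1: "(B1 + e1/2)^2 + (B2 + e2/2)^2 = 2" unfolding i1 using assms(3) defs by (simp add: D_def)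
  have hw2: "(B1 - e1/2)^2 + (B2 - e2/2)^2 = 2" unfolding i1 using assms(4) defs by (simp add: D_def)
  have ae: "A1*e1 + A2*e2 = 0" using hz1 hz2 by (simp add: power2_eq_square algebra_simps)
  have be: "B1*e1 + B2*e2 = 0" using hw1 hw2 by (simp add: power2_eq_square algebra_simps)
  have la: "A1^2 + A2^2 = B1^2 + B2^2" using hz1 hw1 ae be by (simp add: power2_eq_square algebra_simps)
  have enz: "e1 \<noteq> 0 \<or> e2 \<noteq> 0" using assms(5) defs by (auto simp: e1_def e2_def)
  have c1: "e1 * (A1*B2 - A2*B1) = 0"
  proof -
    have "e1 * (A1*B2 - A2*B1) = B2*(A1*e1 + A2*e2) - A2*(B1*e1 + B2*e2)" by (simp add: algebra_simps)
    thus ?thesis using ae be by simp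
  qed
  have c2: "e2 * (A1*B2 - A2*B1) = 0"
  proof -
    have "e2 * (A1*B2 - A2*B1) = A1*(B1*e1 + B2*e2) - B1*(A1*e1 + A2*e2)" by (simp add: algebra_simps)
    thus ?thesis using ae be by simp
  qed
  have cr: "A1*B2 - A2*B1 = 0" using c1 c2 enz by auto
  define S1 where "S1 = A1 + B1"
  define S2 where "S2 = A2 + B2"
  define T1 where "T1 = A1 - B1"
  define T2 where "T2 = A2 - B2"
  have st: "S1*T1 + S2*T2 = 0" using la by (simp add: S1_def S2_def T1_def T2_def power2_eq_square algebra_simps)
  have sx: "S1*T2 - S2*T1 = 0" using cr by (simp add: S1_def S2_def T1_def T2_def algebra_simps)
  have lag: "(S1^2 + S2^2)*(T1^2+T2^2) = (S1*T1 + S2*T2)^2 + (S1*T2 - S2*T1)^2"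
    by (simp add: power2_eq_square algebra_simps)
  have "T1 \<noteq> 0 \<or> T2 \<noteq> 0" using assms(6) defs by (auto simp: T1_def T2_def A1_def A2_def B1_def B2_def)
  hence "T1^2 + T2^2 \<noteq> 0" by (simp add: sum_power2_eq_zero_iff)
  moreover have "(S1^2 + S2^2)*(T1^2+T2^2) = 0" using lag st sx by simp
  ultimately have "S1^2 + S2^2 = 0" by (metis mult_eq_0_iff)
  hence "S2 = 0" by (simp add: sum_power2_eq_zero_iff)
  thus ?thesis using defs by (simp add: S2_def A2_def B2_def)
qed


lemma dist_lt_iff: "dist u v < sqrt 2 \<longleftrightarrow> D u v < 2"
  by (simp add: dist_D)
lemma dist_le_iff: "dist u v \<le> sqrt 2 \<longleftrightarrow> D u v \<le> 2"
  by (simp add: dist_D)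
lemma dist_eq_iff: "dist u v = sqrt 2 \<longleftrightarrow> D u v = 2"
  by (simp add: dist_D)

lemma open_above: "open {w::real\<times>real. Y < snd w}"
  by (intro open_Collect_less continuous_intros)

lemma arc_char:
  assumes pP: "p \<in> P" and below: "\<forall>q\<in>P. snd q < real_of_int y + 1"
  shows "arc_of y P p = {z. D z p = 2 \<and> snd z > real_of_int y + 1 \<and> (\<forall>q\<in>P. D z q \<ge> 2)}"
proof (intro equalityI subsetI)
  fix z assume z: "z \<in> arc_of y P p"
  hence fr: "z \<in> frontier (Utop y P)" and sp: "dist p z = sqrt 2" and ab: "snd z > real_of_int y + 1"
    by (auto simp: arc_of_def)
  have "\<forall>q\<in>P. D z q \<ge> 2"
  proof (rule ballI, rule ccontr)
    fix q assume qP: "q \<in> P" and "\<not> D z q \<ge> 2"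
    hence "dist q z < sqrt 2" by (simp add: dist_lt_iff D_comm)
    let ?O = "ball q (sqrt 2) \<inter> {w. real_of_int y + 1 < snd w}"
    have "open ?O" using open_above by (intro open_Int) auto
    moreover have "z \<in> ?O" using \<open>dist q z < sqrt 2\<close> ab by auto
    moreover have "?O \<subseteq> Utop y P" using qP by (force simp: Utop_def)
    ultimately have "z \<in> interior (Utop y P)" by (rule interiorI)
    thus False using fr by (simp add: frontier_def)
  qed
  moreover have "D z p = 2" using sp by (simp add: dist_eq_iff D_comm)
  ultimately show "z \<in> {z. D z p = 2 \<and> snd z > real_of_int y + 1 \<and> (\<forall>q\<in>P. D z q \<ge> 2)}"
    using ab by auto
next
  fix z assume "z \<in> {z. D z p = 2 \<and> snd z > real_of_int y + 1 \<and> (\<forall>q\<in>P. D z q \<ge> 2)}"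
  hence zp: "D z p = 2" and ab: "snd z > real_of_int y + 1" and out: "\<forall>q\<in>P. D z q \<ge> 2" by auto
  have sp: "dist p z = sqrt 2" using zp by (simp add: dist_eq_iff D_comm)
  have "z \<in> Utop y P" using pP sp ab by (force simp: Utop_def)
  hence "z \<in> closure (Utop y P)" using closure_subset by auto
  moreover have "z \<notin> interior (Utop y P)"
  proof
    assume "z \<in> interior (Utop y P)"
    then obtain e where e: "e > 0" "ball z e \<subseteq> Utop y P" by (auto simp: mem_interior)
    define w where "w = (fst z, snd z + e/2)"
    have "D z w = (e/2)^2" by (simp add: D_def w_def)
    hence "dist z w = e/2" using e by (simp add: dist_D)
    hence "w \<in> Utop y P" using e by auto
    then obtain q where qP: "q \<in> P" and "dist q w \<le> sqrt 2" by (auto simp: Utop_def)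
    hence le: "D w q \<le> 2" by (simp add: dist_le_iff D_comm)
    have "D w q = D z q + e*(snd z - snd q) + e^2/4"
      by (simp add: D_def w_def power2_eq_square algebra_simps)
    moreover have "e*(snd z - snd q) > 0" using below qP ab e by (intro mult_pos_pos) auto
    moreover have "e^2/4 > 0" using e by simp
    ultimately show False using le out qP by fastforce
  qed
  ultimately have "z \<in> frontier (Utop y P)" by (simp add: frontier_def)
  thus "z \<in> arc_of y P p" using sp ab by (simp add: arc_of_def)
qed


lemma arc_connected:
  assumes pP: "p \<in> P" and below: "\<forall>q\<in>P. snd q < real_of_int y + 1"
  shows "connected (arc_of y P p)"
proof -
  define Y where "Y = real_of_int y + 1"
  define A where "A = arc_of y P p"
  have Achar: "A = {z. D z p = 2 \<and> snd z > Y \<and> (\<forall>q\<in>P. D z q \<ge> 2)}"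
    using arc_char[OF pP below] by (simp add: A_def Y_def)
  define F where "F = (\<lambda>w::real. (w, snd p + sqrt (2 - (w - fst p)^2)))"
  define S where "S = {w. F w \<in> A}"
  have contF: "continuous_on X F" for X by (unfold F_def, intro continuous_intros)
  have pY: "snd p < Y" using below pP by (simp add: Y_def)
  have img: "A = F ` S"
  proof (intro equalityI subsetI)
    fix z assume zA: "z \<in> A"
    hence zp: "D z p = 2" and zY: "snd z > Y" using Achar by auto
    have "(snd z - snd p)^2 = 2 - (fst z - fst p)^2" using zp by (simp add: D_def)
    hence "sqrt (2 - (fst z - fst p)^2) = snd z - snd p" using zY pY by (metis real_sqrt_abs abs_of_pos diff_gt_0_iff_gt order.strict_trans1 less_imp_le)
    hence "F (fst z) = z" by (simp add: F_def prod_eq_iff)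
    thus "z \<in> F ` S" using zA S_def by (metis (mono_tags, lifting) image_eqI mem_Collect_eq)
  qed (auto simp: S_def)
  have between: "snd (F t) > Y \<and> D (F t) p = 2"
    if "w1 \<in> S" "w3 \<in> S" "w1 \<le> t" "t \<le> w3" for w1 w3 t
  proof -
    have "snd (F w1) > Y" "snd (F w3) > Y" using that Achar S_def by auto
    hence y1: "sqrt (2 - (w1 - fst p)^2) > Y - snd p" and y3: "sqrt (2 - (w3 - fst p)^2) > Y - snd p"
      by (auto simp: F_def)
    have "\<bar>t - fst p\<bar> \<le> \<bar>w1 - fst p\<bar> \<or> \<bar>t - fst p\<bar> \<le> \<bar>w3 - fst p\<bar>" using that(3,4) by linarith
    hence "(t - fst p)^2 \<le> (w1 - fst p)^2 \<or> (t - fst p)^2 \<le> (w3 - fst p)^2" by (simp add: abs_le_square_iff)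
    hence ge: "sqrt (2 - (t - fst p)^2) > Y - snd p" using y1 y3
      by (meson diff_left_mono order_less_le_trans real_sqrt_le_mono)
    hence "sqrt (2 - (t - fst p)^2) > 0" using pY by linarith
    hence "2 - (t - fst p)^2 > 0" by simp
    hence "D (F t) p = 2" by (simp add: F_def D_def)
    with ge show ?thesis by (simp add: F_def)
  qed
  have "connected S"
    unfolding connected_iff_interval
  proof (intro ballI allI impI)
    fix w1 w3 w assume w1: "w1 \<in> S" and w3: "w3 \<in> S" and le: "w1 \<le> w" "w \<le> w3"
    have bw: "snd (F w) > Y \<and> D (F w) p = 2" using between[OF w1 w3 le] .
    have "\<forall>q\<in>P. D (F w) q \<ge> 2"
    proof (rule ballI, rule ccontr)
      fix q assume qP: "q \<in> P" and "\<not> D (F w) q \<ge> 2"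
      hence lt: "D (F w) q < 2" by simp
      have pq: "p \<noteq> q" using lt bw by auto
      define g where "g = (\<lambda>t. D (F t) q)"
      have contg: "continuous_on X g" for X unfolding g_def D_def using contF
        by (intro continuous_intros) (auto intro: continuous_on_subset)
      have g1: "g w1 \<ge> 2" "g w3 \<ge> 2" using w1 w3 qP Achar S_def g_def by auto
      obtain ta where ta: "w1 \<le> ta" "ta \<le> w" "g ta = 2"
        using IVT2'[of g w 2 w1, OF _ _ le(1) contg] lt g1 g_def by auto
      obtain tb where tb: "w \<le> tb" "tb \<le> w3" "g tb = 2"
        using IVT'[of g w 2 w3, OF _ _ le(2) contg] lt g1 g_def by auto
      have "ta \<noteq> w" "tb \<noteq> w" using ta tb lt g_def by auto
      hence "ta < tb" using ta tb by linarith
      have ba: "snd (F ta) > Y \<and> D (F ta) p = 2" using between[OF w1 w3] ta le by auto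
      have bb: "snd (F tb) > Y \<and> D (F tb) p = 2" using between[OF w1 w3] tb le by auto
      have "F ta \<noteq> F tb" using \<open>ta < tb\<close> by (simp add: F_def)
      hence "snd (F ta) + snd (F tb) = snd p + snd q"
        using rhombus[of "F ta" p q "F tb"] ba bb ta tb pq g_def by auto
      moreover have "snd q < Y" using below qP by (simp add: Y_def)
      ultimately show False using ba bb pY by linarith
    qed
    thus "w \<in> S" using bw Achar S_def by auto
  qed
  hence "connected (F ` S)" using contF connected_continuous_image by blast
  thus ?thesis using img A_def by simp
qed


lemma same_fst:
  assumes "D a p = 2" "D a' p = 2" "snd a > snd p" "snd a' > snd p" "fst a = fst a'"
  shows "a = a'"
proof -
  have "(fst a - fst p)^2 + (snd a - snd p)^2 = (fst a' - fst p)^2 + (snd a' - snd p)^2"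
    using assms(1,2) by (simp add: D_def)
  hence "(snd a - snd p)^2 = (snd a' - snd p)^2" using assms(5) by simp
  moreover have "snd a - snd p \<ge> 0" "snd a' - snd p \<ge> 0" using assms(3,4) by auto
  ultimately have "snd a - snd p = snd a' - snd p" using power2_eq_iff_nonneg by blast
  thus ?thesis using assms(5) by (simp add: prod_eq_iff)
qed

lemma ordering:
  assumes pP: "p \<in> P" and qP: "q \<in> P" and below: "\<forall>q\<in>P. snd q < real_of_int y + 1"
    and pq: "p \<noteq> q" and le: "fst p \<le> fst q"
  shows "\<forall>a\<in>arc_of y P p. \<forall>b\<in>arc_of y P q. fst a \<le> fst b"
proof (intro ballI)
  fix a b assume a: "a \<in> arc_of y P p" and b: "b \<in> arc_of y P q"
  have A: "D a p = 2" "snd a > real_of_int y + 1" "D a q \<ge> 2" using a arc_char[OF pP below] qP by auto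
  have B: "D b q = 2" "snd b > real_of_int y + 1" "D b p \<ge> 2" using b arc_char[OF qP below] pP by auto
  show "fst a \<le> fst b"
    using L2[OF pq le _ _ A(1) A(3) A(2) B(1) B(3) B(2)] below pP qP by auto
qed

theorem lemma11:
  fixes x y :: int and P :: "(real \<times> real) set"
  assumes "finite P" and "P \<subseteq> cell x y"
  shows "(\<forall>p\<in>P. connected (arc_of y P p)) \<and>
         (\<forall>p\<in>P. \<forall>q\<in>P. p \<noteq> q \<longrightarrow> contributes y P p \<longrightarrow> contributes y P q \<longrightarrow>
            ((\<forall>a\<in>arc_of y P p. \<forall>b\<in>arc_of y P q. fst a \<le> fst b) \<longleftrightarrow> fst p < fst q))"
proof -
  have below: "\<forall>q\<in>P. snd q < real_of_int y + 1"
    using assms(2) by (auto simp: cell_def)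
  have part1: "\<forall>p\<in>P. connected (arc_of y P p)" using arc_connected below by blast
  have part2: "((\<forall>a\<in>arc_of y P p. \<forall>b\<in>arc_of y P q. fst a \<le> fst b) \<longleftrightarrow> fst p < fst q)"
    if pP: "p \<in> P" and qP: "q \<in> P" and pq: "p \<noteq> q" and cp: "contributes y P p" and cq: "contributes y P q" for p q
  proof
    assume "fst p < fst q"
    thus "\<forall>a\<in>arc_of y P p. \<forall>b\<in>arc_of y P q. fst a \<le> fst b" using ordering[OF pP qP below pq] by simp
  next
    assume LHS: "\<forall>a\<in>arc_of y P p. \<forall>b\<in>arc_of y P q. fst a \<le> fst b"
    show "fst p < fst q"
    proof (rule ccontr)
      assume "\<not> fst p < fst q"
      hence "fst q \<le> fst p" by simp
      hence R: "\<forall>b\<in>arc_of y P q. \<forall>a\<in>arc_of y P p. fst b \<le> fst a" using ordering[OF qP pP below] pq by auto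
      obtain a1 a2 where a: "a1 \<in> arc_of y P p" "a2 \<in> arc_of y P p" "a1 \<noteq> a2"
        using cp by (auto simp: contributes_def)
      obtain b where b: "b \<in> arc_of y P q" using cq by (auto simp: contributes_def)
      have "fst a1 = fst b" "fst a2 = fst b" using LHS R a b by (meson order_antisym)+
      moreover have "D a1 p = 2" "snd a1 > real_of_int y + 1" "D a2 p = 2" "snd a2 > real_of_int y + 1"
        using a arc_char[OF pP below] by auto
      moreover have "snd p < real_of_int y + 1" using below pP by auto
      ultimately have "a1 = a2" using same_fst[of a1 p a2] by auto
      thus False using a by simp
    qed
  qed
  show ?thesis using part1 part2 by blast
qed

end
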